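(* The Exhaustive-PBS (EPBS) mechanism, which outputs the reported-welfare-maximizing assignment among the collision-free leaves of the fully expanded EPBS search tree and charges VCG-based payments $p_i(\hat\tau)=\sum_{j\neq i}\hat w_j(d^\ast_{-i})-\sum_{j\neq i}\hat w_j(d^\ast)$, where $d^\ast$ and $d^\ast_{-i}$ maximize $\sum_i\hat w_i$ and $\sum_{j\ne i}\hat w_j$ respectively over that set of leaf assignments, is strategyproof: no agent can increase her utility $u_i=w_i(d^\ast)-p_i$ by misreporting her cost $c_i$ or value $v_i$, whatever the other agents report.
   Context: Setting: graph $(V,E)$, agents $i=1,\dots,n$ with types $\tau_i=(s_i,g_i,c_i,v_i)$; only $c_i,v_i$ can be misreported; paths, feasible (vertex- and edge-conflict-free) assignments, and welfare $w_i(d)=\max(0,v_i-c_i|\pi_i^d|)$ as usual; $\hat w_i$ is welfare computed from reports. EPBS search tree: each node holds a strict partial order (priority ordering) on agents and a plan (one path per agent) in which each agent's path is a shortest path from her start to her goal avoiding conflicts with paths of all agents of higher priority. The root has the empty ordering and individually shortest paths. A node whose plan has a conflict is expanded by choosing a conflict between two agents $i,j$ and creating two children, one adding $i\succ j$ and the other $j\succ i$ to the ordering (transitively closed), each replanning paths by single-agent search. All choices (which conflict to branch on, tie-breaking among equal-length paths) are made by a fixed rule using a fixed lexicographic ordering of agents and their start/goal vertices only. The tree is expanded exhaustively until every leaf is conflict-free; the range is the set of assignments in conflict-free leaves. A mechanism is strategyproof if truthful reporting of $(c_i,v_i)$ is a dominant strategy for every agent. *)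

theory Defs
  imports Complex_Main
begin

text \<open>The agent stays at the last vertex forever.\<close>

definition is_path :: "('v \<times> 'v) set \<Rightarrow> 'v \<Rightarrow> 'v \<Rightarrow> 'v list \<Rightarrow> bool" where
  "is_path E a b \<pi> \<longleftrightarrow> \<pi> \<noteq> [] \<and> hd \<pi> = a \<and> last \<pi> = b \<and>
     (\<forall>k. Suc k < length \<pi> \<longrightarrow> \<pi> ! k = \<pi> ! Suc k \<or> (\<pi> ! k, \<pi> ! Suc k) \<in> E)"

definition path_len :: "'v list \<Rightarrow> nat" where
  "path_len \<pi> = length \<pi> - 1"

definition pos :: "'v list \<Rightarrow> nat \<Rightarrow> 'v" where
  "pos \<pi> t = \<pi> ! min t (length \<pi> - 1)"

definition conflict :: "'v list \<Rightarrow> 'v list \<Rightarrow> bool" where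
  "conflict \<pi> \<sigma> \<longleftrightarrow> (\<exists>t. pos \<pi> t = pos \<sigma> t \<or>
      (pos \<pi> t = pos \<sigma> (Suc t) \<and> pos \<pi> (Suc t) = pos \<sigma> t))"

definition has_conflict :: "nat \<Rightarrow> (nat \<Rightarrow> 'v list) \<Rightarrow> bool" where
  "has_conflict n d \<longleftrightarrow> (\<exists>i<n. \<exists>j<n. i \<noteq> j \<and> conflict (d i) (d j))"

definition shortest_avoiding :: "('v \<times> 'v) set \<Rightarrow> 'v \<Rightarrow> 'v \<Rightarrow> 'v list set \<Rightarrow> 'v list \<Rightarrow> bool" where
  "shortest_avoiding E a b S \<pi> \<longleftrightarrow> is_path E a b \<pi> \<and> (\<forall>\<sigma>\<in>S. \<not> conflict \<pi> \<sigma>) \<and>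
     (\<forall>\<pi>'. is_path E a b \<pi>' \<and> (\<forall>\<sigma>\<in>S. \<not> conflict \<pi>' \<sigma>) \<longrightarrow> path_len \<pi> \<le> path_len \<pi>')"

text \<open>Priority orderings are relations on agents; (k, i) \<in> R means k \<succ> i (k has higher priority).\<close>
definition plan_respects :: "('v \<times> 'v) set \<Rightarrow> nat \<Rightarrow> (nat \<Rightarrow> 'v) \<Rightarrow> (nat \<Rightarrow> 'v) \<Rightarrow>
    (nat \<times> nat) set \<Rightarrow> (nat \<Rightarrow> 'v list) \<Rightarrow> bool" where
  "plan_respects E n s g R d \<longleftrightarrow>
     (\<forall>i<n. shortest_avoiding E (s i) (g i) {d k | k. k < n \<and> (k, i) \<in> R} (d i))"

text \<open>A fixed EPBS rule: the root plan, the conflict-selection rule, and the replanning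
  (single-agent search with fixed tie-breaking). These are fixed functions of the ordering
  and plan of a node (for the fixed graph and start/goal vertices); they do not receive the
  reported costs/values.\<close>
definition epbs_rule :: "('v \<times> 'v) set \<Rightarrow> nat \<Rightarrow> (nat \<Rightarrow> 'v) \<Rightarrow> (nat \<Rightarrow> 'v) \<Rightarrow>
    (nat \<Rightarrow> 'v list) \<Rightarrow>
    ((nat \<times> nat) set \<Rightarrow> (nat \<Rightarrow> 'v list) \<Rightarrow> nat \<times> nat) \<Rightarrow>
    ((nat \<times> nat) set \<Rightarrow> (nat \<Rightarrow> 'v list) \<Rightarrow> (nat \<Rightarrow> 'v list) option) \<Rightarrow> bool" where
  "epbs_rule E n s g d0 pick replan \<longleftrightarrow>
     plan_respects E n s g {} d0 \<and>
     (\<forall>R d. has_conflict n d \<longrightarrow>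
        (let (i, j) = pick R d in i < n \<and> j < n \<and> i \<noteq> j \<and> conflict (d i) (d j))) \<and>
     (\<forall>R d d'. replan R d = Some d' \<longrightarrow> plan_respects E n s g R d')"

inductive_set epbs_nodes :: "nat \<Rightarrow> (nat \<Rightarrow> 'v list) \<Rightarrow>
    ((nat \<times> nat) set \<Rightarrow> (nat \<Rightarrow> 'v list) \<Rightarrow> nat \<times> nat) \<Rightarrow>
    ((nat \<times> nat) set \<Rightarrow> (nat \<Rightarrow> 'v list) \<Rightarrow> (nat \<Rightarrow> 'v list) option) \<Rightarrow>
    ((nat \<times> nat) set \<times> (nat \<Rightarrow> 'v list)) set"
  for n d0 pick replan where
  root_node: "({}, d0) \<in> epbs_nodes n d0 pick replan"
| child1: "\<lbrakk>(R, d) \<in> epbs_nodes n d0 pick replan; has_conflict n d; pick R d = (i, j);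
            R' = trancl (insert (i, j) R); \<forall>k. (k, k) \<notin> R'; replan R' d = Some d'\<rbrakk>
           \<Longrightarrow> (R', d') \<in> epbs_nodes n d0 pick replan"
| child2: "\<lbrakk>(R, d) \<in> epbs_nodes n d0 pick replan; has_conflict n d; pick R d = (i, j);
            R' = trancl (insert (j, i) R); \<forall>k. (k, k) \<notin> R'; replan R' d = Some d'\<rbrakk>
           \<Longrightarrow> (R', d') \<in> epbs_nodes n d0 pick replan"

text \<open>The range: assignments of the conflict-free (hence leaf) nodes.\<close>
definition epbs_range :: "nat \<Rightarrow> (nat \<Rightarrow> 'v list) \<Rightarrow>
    ((nat \<times> nat) set \<Rightarrow> (nat \<Rightarrow> 'v list) \<Rightarrow> nat \<times> nat) \<Rightarrow>
    ((nat \<times> nat) set \<Rightarrow> (nat \<Rightarrow> 'v list) \<Rightarrow> (nat \<Rightarrow> 'v list) option) \<Rightarrow>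
    (nat \<Rightarrow> 'v list) set" where
  "epbs_range n d0 pick replan =
     {d. \<exists>R. (R, d) \<in> epbs_nodes n d0 pick replan \<and> \<not> has_conflict n d}"

definition welfare :: "real \<Rightarrow> real \<Rightarrow> 'v list \<Rightarrow> real" where
  "welfare c v \<pi> = max 0 (v - c * real (path_len \<pi>))"

definition social_welfare :: "nat \<Rightarrow> (nat \<Rightarrow> real) \<Rightarrow> (nat \<Rightarrow> real) \<Rightarrow> (nat \<Rightarrow> 'v list) \<Rightarrow> real" where
  "social_welfare n c v d = (\<Sum>j<n. welfare (c j) (v j) (d j))"

definition others_welfare :: "nat \<Rightarrow> nat \<Rightarrow> (nat \<Rightarrow> real) \<Rightarrow> (nat \<Rightarrow> real) \<Rightarrow> (nat \<Rightarrow> 'v list) \<Rightarrow> real" where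
  "others_welfare n i c v d = (\<Sum>j\<in>{..<n} - {i}. welfare (c j) (v j) (d j))"

definition is_maximizer :: "('a \<Rightarrow> real) \<Rightarrow> 'a set \<Rightarrow> 'a \<Rightarrow> bool" where
  "is_maximizer f A x \<longleftrightarrow> x \<in> A \<and> (\<forall>y\<in>A. f y \<le> f x)"

definition vcg_payment :: "nat \<Rightarrow> nat \<Rightarrow> (nat \<Rightarrow> real) \<Rightarrow> (nat \<Rightarrow> real) \<Rightarrow>
    (nat \<Rightarrow> 'v list) \<Rightarrow> (nat \<Rightarrow> 'v list) \<Rightarrow> real" where
  "vcg_payment n i c v d dmi = others_welfare n i c v dmi - others_welfare n i c v d"

end

theory Submission
  imports Defs
begin

lemma sw_split:
  assumes "i < n"
  shows "social_welfare n c v d = welfare (c i) (v i) (d i) + others_welfare n i c v d"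
proof -
  have "{..<n} = insert i ({..<n} - {i})" using assms by auto
  then show ?thesis unfolding social_welfare_def others_welfare_def
    by (metis (no_types, lifting) Diff_iff finite_Diff finite_lessThan insertI1 sum.insert)
qed

lemma ow_upd:
  "others_welfare n i (c(i := a)) (v(i := b)) d = others_welfare n i c v d"
  unfolding others_welfare_def by (rule sum.cong) auto

theorem mainTheorem3:
  fixes E :: "('v \<times> 'v) set" and n :: nat and s g :: "nat \<Rightarrow> 'v"
    and d0 :: "nat \<Rightarrow> 'v list"
    and pick :: "(nat \<times> nat) set \<Rightarrow> (nat \<Rightarrow> 'v list) \<Rightarrow> nat \<times> nat"
    and replan :: "(nat \<times> nat) set \<Rightarrow> (nat \<Rightarrow> 'v list) \<Rightarrow> (nat \<Rightarrow> 'v list) option"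
    and i :: nat and ci vi ci' vi' :: real and rc rv :: "nat \<Rightarrow> real"
    and dT dTm dM dMm :: "nat \<Rightarrow> 'v list"
  assumes rule: "epbs_rule E n s g d0 pick replan"
    and i: "i < n"
    and truthful_out: "is_maximizer (social_welfare n (rc(i := ci)) (rv(i := vi)))
                          (epbs_range n d0 pick replan) dT"
    and truthful_minus: "is_maximizer (others_welfare n i (rc(i := ci)) (rv(i := vi)))
                          (epbs_range n d0 pick replan) dTm"
    and mis_out: "is_maximizer (social_welfare n (rc(i := ci')) (rv(i := vi')))
                          (epbs_range n d0 pick replan) dM"
    and mis_minus: "is_maximizer (others_welfare n i (rc(i := ci')) (rv(i := vi')))
                          (epbs_range n d0 pick replan) dMm"
  shows "welfare ci vi (dM i) - vcg_payment n i (rc(i := ci')) (rv(i := vi')) dM dMm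
         \<le> welfare ci vi (dT i) - vcg_payment n i (rc(i := ci)) (rv(i := vi)) dT dTm"
proof -
  let ?R = "epbs_range n d0 pick replan"
  let ?ct = "rc(i := ci)" and ?vt = "rv(i := vi)" and ?cm = "rc(i := ci')" and ?vm = "rv(i := vi')"
  have dMR: "dM \<in> ?R" and dTR: "dT \<in> ?R" and dTmR: "dTm \<in> ?R" and dMmR: "dMm \<in> ?R"
    using assms unfolding is_maximizer_def by auto
  have o1: "others_welfare n i ?cm ?vm dMm = others_welfare n i ?ct ?vt dMm"
    by (simp add: ow_upd)
  have o2: "others_welfare n i ?cm ?vm dM = others_welfare n i ?ct ?vt dM"
    by (simp add: ow_upd)
  have a: "others_welfare n i ?ct ?vt dMm \<le> others_welfare n i ?ct ?vt dTm"
    using truthful_minus dMmR unfolding is_maximizer_def by auto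
  have b: "others_welfare n i ?cm ?vm dTm \<le> others_welfare n i ?cm ?vm dMm"
    using mis_minus dTmR unfolding is_maximizer_def by auto
  have b': "others_welfare n i ?ct ?vt dTm \<le> others_welfare n i ?ct ?vt dMm"
    using b by (simp add: ow_upd)
  have c: "social_welfare n ?ct ?vt dM \<le> social_welfare n ?ct ?vt dT"
    using truthful_out dMR unfolding is_maximizer_def by auto
  have sM: "social_welfare n ?ct ?vt dM = welfare ci vi (dM i) + others_welfare n i ?ct ?vt dM"
    using sw_split[OF i, of "rc(i := ci)" "rv(i := vi)"] by simp
  have sT: "social_welfare n ?ct ?vt dT = welfare ci vi (dT i) + others_welfare n i ?ct ?vt dT"
    using sw_split[OF i, of "rc(i := ci)" "rv(i := vi)"] by simp
  show ?thesis unfolding vcg_payment_def using o1 o2 a b' c sM sT by linarith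
qed

end
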